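(* Let $r<0$ and $0<y_1\le y_2$, and let $$p(z)=(z-r)\prod_{j=1}^2(z-(r+iy_j))(z-(r-iy_j)).$$ Then $(1/p(n))_{n\in\mathbb Z_+}$ is a Hausdorff moment sequence if and only if $y_2/y_1$ is a positive integer greater than $1$.
   Context: A sequence $(x_n)_{n\in\mathbb Z_+}$ of positive numbers is a Hausdorff moment sequence if there is a positive Radon measure $\mu$ on $[0,1]$ with $x_n=\int_0^1 t^n\,d\mu(t)$ for all $n\in\mathbb Z_+$. *)

theory Defs
  imports "HOL-Analysis.Analysis"
begin

definition hausdorff_moment_seq :: "(nat \<Rightarrow> real) \<Rightarrow> bool" where
  "hausdorff_moment_seq x \<longleftrightarrow>
     (\<forall>n. x n > 0) \<and>
     (\<exists>\<mu> :: real measure.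
        space \<mu> = {0..1} \<and>
        sets \<mu> = sets (restrict_space borel {0..1}) \<and>
        finite_measure \<mu> \<and>
        (\<forall>n. x n = (\<integral>t. t ^ n \<partial>\<mu>)))"

end

theory Submission
  imports Defs "HOL-Real_Asymp.Real_Asymp"
begin

lemma FTC0inf:
  fixes f F :: "real \<Rightarrow> real"
  assumes "set_integrable lborel {0<..} f"
   "\<And>x. 0 < x \<Longrightarrow> (F has_real_derivative f x) (at x)"
   "\<And>x. 0 < x \<Longrightarrow> isCont f x"
   "isCont F 0" "(F \<longlongrightarrow> 0) at_top"
  shows "(LBINT x:{0<..}. f x) = - F 0"
proof -
  have l0: "(F \<longlongrightarrow> F 0) (at_right 0)"
    using assms(4) by (simp add: isCont_def filterlim_at_split)
  have "(LBINT x=ereal 0..\<infinity>. f x) = 0 - F 0"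
    apply (rule interval_integral_FTC_integrable)
    using assms l0 by (auto simp: ereal_tendsto_simps has_real_derivative_iff_has_vector_derivative[symmetric])
  then show ?thesis by (simp add: interval_integral_to_infinity_eq)
qed

lemma lim_exp_bound:
  fixes F :: "real \<Rightarrow> real"
  assumes "c > 0" "\<And>u. u \<ge> 0 \<Longrightarrow> \<bar>F u\<bar> \<le> K * (1 + u) * exp (-(c*u))"
  shows "(F \<longlongrightarrow> 0) at_top"
proof (rule Lim_null_comparison)
  show "\<forall>\<^sub>F x in at_top. norm (F x) \<le> K * (1 + x) * exp (-(c*x))"
    using eventually_ge_at_top[of "0::real"] by (rule eventually_mono) (use assms(2) in auto)
  have "((\<lambda>x. (1 + x) * exp (-(c*x))) \<longlongrightarrow> 0) at_top" using assms(1) by real_asymp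
  then show "((\<lambda>x. K * (1 + x) * exp (-(c*x))) \<longlongrightarrow> 0) at_top"
    using tendsto_mult_right_zero[of _ at_top K] by (simp add: mult.assoc)
qed

lemma integ_basic:
  assumes c: "c > (0::real)"
  shows "set_integrable lborel {0<..} (\<lambda>u. (1 + u) * exp (-(c*u)))"
proof -
  let ?F = "\<lambda>u::real. - ((1+u)/c + 1/c^2) * exp (-(c*u))"
  have "set_integrable lborel (einterval (ereal 0) \<infinity>) (\<lambda>u. (1 + u) * exp (-(c*u)))"
  proof (rule interval_integral_FTC_nonneg[where F = ?F and A = "?F 0" and B = 0])
    show "(?F has_real_derivative (1 + x) * exp (-(c*x))) (at x)" for x
      using c by (auto intro!: derivative_eq_intros simp: field_simps power2_eq_square)
    show "((?F \<circ> real_of_ereal) \<longlongrightarrow> ?F 0) (at_right (ereal 0))"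
      unfolding ereal_tendsto_simps using c by (intro tendsto_intros) auto
    show "((?F \<circ> real_of_ereal) \<longlongrightarrow> 0) (at_left \<infinity>)"
      unfolding ereal_tendsto_simps using c by real_asymp
  qed auto
  then show ?thesis by simp
qed

lemma integ_bound:
  assumes c: "c > (0::real)" and g: "g \<in> borel_measurable borel"
    and b: "\<And>u. u > 0 \<Longrightarrow> \<bar>g u\<bar> \<le> K * (1 + u)"
  shows "set_integrable lborel {0<..} (\<lambda>u. exp (-(c*u)) * g u)"
proof (rule set_integrable_bound)
  show "set_integrable lborel {0<..} (\<lambda>u. K * ((1 + u) * exp (-(c*u))))"
    using integ_basic[OF c] by (rule set_integrable_mult_right)
  show "set_borel_measurable lborel {0<..} (\<lambda>u. exp (-(c*u)) * g u)"
    unfolding set_borel_measurable_def using g by measurable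
  show "AE x in lborel. x \<in> {0<..} \<longrightarrow> norm (exp (-(c*x)) * g x) \<le> norm (K * ((1 + x) * exp (-(c*x))))"
  proof (rule AE_I2, rule impI)
    fix x :: real assume "x \<in> {0<..}"
    then have "\<bar>g x\<bar> \<le> K * (1 + x)" using b by auto
    then have "exp (-(c*x)) * \<bar>g x\<bar> \<le> exp (-(c*x)) * (K * (1 + x))" by simp
    then show "norm (exp (-(c*x)) * g x) \<le> norm (K * ((1 + x) * exp (-(c*x))))"
      apply (simp add: abs_mult mult_ac) by (metis abs_ge_self abs_mult order_trans)
  qed
qed

lemma tendsto_zero_bdd:
  fixes f g :: "real \<Rightarrow> real"
  assumes "(f \<longlongrightarrow> 0) F" "\<And>x. \<bar>g x\<bar> \<le> M"
  shows "((\<lambda>x. f x * g x) \<longlongrightarrow> 0) F"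
proof (rule Lim_null_comparison)
  show "\<forall>\<^sub>F x in F. norm (f x * g x) \<le> \<bar>f x\<bar> * M"
    by (rule always_eventually) (simp add: abs_mult mult_left_mono[OF assms(2) abs_ge_zero])
  show "((\<lambda>x. \<bar>f x\<bar> * M) \<longlongrightarrow> 0) F"
    using tendsto_mult_left_zero[OF tendsto_rabs_zero[OF assms(1)]] by simp
qed

lemma trig_bdd: "\<bar>p * sin x + q * cos y\<bar> \<le> \<bar>p\<bar> + \<bar>(q::real)\<bar>" for x y :: real
proof -
  have "\<bar>p * sin x + q * cos y\<bar> \<le> \<bar>p\<bar> * \<bar>sin x\<bar> + \<bar>q\<bar> * \<bar>cos y\<bar>"
    unfolding abs_mult[symmetric] by (rule abs_triangle_ineq)
  also have "\<dots> \<le> \<bar>p\<bar> * 1 + \<bar>q\<bar> * 1"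
    by (intro add_mono mult_left_mono) auto
  finally show ?thesis by simp
qed

lemma exp_lim0: "c > 0 \<Longrightarrow> ((\<lambda>u::real. exp (-(c*u))) \<longlongrightarrow> 0) at_top"
  by real_asymp
lemma exp_lim1: "c > 0 \<Longrightarrow> ((\<lambda>u::real. u * exp (-(c*u))) \<longlongrightarrow> 0) at_top"
  by real_asymp

lemma lap_FTC:
  fixes f F :: "real \<Rightarrow> real"
  assumes "set_integrable lborel {0<..} f"
   "\<And>x. (F has_real_derivative f x) (at x)"
   "\<And>x. isCont f x"
   "(F \<longlongrightarrow> 0) at_top"
  shows "has_bochner_integral lborel (\<lambda>u. indicator {0<..} u *\<^sub>R f u) (- F 0)"
proof -
  have i: "integrable lborel (\<lambda>u. indicator {0<..} u *\<^sub>R f u)"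
    using assms(1) by (simp add: set_integrable_def)
  have "(LBINT x:{0<..}. f x) = - F 0"
    by (rule FTC0inf) (use assms DERIV_isCont[OF assms(2)] in auto)
  then show ?thesis using has_bochner_integral_integrable[OF i]
    by (simp add: set_lebesgue_integral_def)
qed

lemma lap1: assumes c: "c > (0::real)"
  shows "has_bochner_integral lborel (\<lambda>u. indicator {0<..} u *\<^sub>R (exp (-(c*u)) * 1)) (1/c)"
proof -
  have "has_bochner_integral lborel (\<lambda>u. indicator {0<..} u *\<^sub>R (exp (-(c*u)) * 1)) (- (\<lambda>u. - exp (-(c*u)) / c) 0)"
  proof (rule lap_FTC)
    show "set_integrable lborel {0<..} (\<lambda>u. exp (- (c * u)) * 1)"
      by (rule integ_bound[OF c, where K=1]) auto
    show "((\<lambda>u. - exp (-(c*u)) / c) has_real_derivative exp (- (c * x)) * 1) (at x)" for x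
      apply (insert c) by (rule derivative_eq_intros refl | simp)+
    show "((\<lambda>u. - exp (-(c*u)) / c) \<longlongrightarrow> 0) at_top"
      using c by real_asymp
  qed (auto intro!: continuous_intros)
  then show ?thesis by simp
qed

lemma lapu: assumes c: "c > (0::real)"
  shows "has_bochner_integral lborel (\<lambda>u. indicator {0<..} u *\<^sub>R (exp (-(c*u)) * u)) (1/c^2)"
proof -
  let ?F = "\<lambda>u. - (u/c + 1/c^2) * exp (-(c*u))"
  have "has_bochner_integral lborel (\<lambda>u. indicator {0<..} u *\<^sub>R (exp (-(c*u)) * u)) (- ?F 0)"
  proof (rule lap_FTC)
    show "set_integrable lborel {0<..} (\<lambda>u. exp (- (c * u)) * u)"
      by (rule integ_bound[OF c, where K=1]) auto
    show "(?F has_real_derivative exp (- (c * x)) * x) (at x)" for x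
      apply (insert c) apply (rule derivative_eq_intros refl | simp)+
      by (simp add: field_simps power2_eq_square)
    show "(?F \<longlongrightarrow> 0) at_top"
      using c by real_asymp
  qed (auto intro!: continuous_intros)
  then show ?thesis by simp
qed

lemma trig_bdd_div: "D > 0 \<Longrightarrow> \<bar>(p * sin x + q * cos y) / D\<bar> \<le> (\<bar>p\<bar> + \<bar>q\<bar>) / (D::real)" for x y :: real
  using trig_bdd[of p x q y] by (simp add: divide_right_mono)

lemma lapcos: assumes c: "c > (0::real)"
  shows "has_bochner_integral lborel (\<lambda>u. indicator {0<..} u *\<^sub>R (exp (-(c*u)) * cos (a*u))) (c/(a^2+c^2))"
proof -
  define D where "D = a^2+c^2"
  have d: "D > 0" using c by (simp add: D_def add_nonneg_pos)
  let ?F = "\<lambda>u. exp (-(c*u)) * ((a * sin (a*u) + (-c) * cos (a*u)) / D)"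
  have "has_bochner_integral lborel (\<lambda>u. indicator {0<..} u *\<^sub>R (exp (-(c*u)) * cos (a*u))) (- ?F 0)"
  proof (rule lap_FTC)
    show "set_integrable lborel {0<..} (\<lambda>u. exp (- (c * u)) * cos (a*u))"
      by (rule integ_bound[OF c, where K=1]) (auto intro: order_trans[OF abs_cos_le_one])
    show "(?F has_real_derivative exp (- (c * x)) * cos (a*x)) (at x)" for x
      apply (insert d) apply (rule derivative_eq_intros refl | simp)+
      apply (simp add: field_simps) by (simp add: D_def power2_eq_square algebra_simps)
    show "(?F \<longlongrightarrow> 0) at_top"
      by (rule tendsto_zero_bdd[OF exp_lim0[OF c] trig_bdd_div[OF d]])
  qed (auto intro!: continuous_intros)
  then show ?thesis using d by (simp add: D_def)
qed

lemma lapusin: assumes c: "c > (0::real)"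
  shows "has_bochner_integral lborel (\<lambda>u. indicator {0<..} u *\<^sub>R (exp (-(c*u)) * (u * sin (a*u)))) (2*a*c/(a^2+c^2)^2)"
proof -
  define D where "D = a^2+c^2"
  have d: "D > 0" using c by (simp add: D_def add_nonneg_pos)
  have d2: "D^2 > 0" using d by simp
  let ?F = "\<lambda>u. (u * exp (-(c*u))) * (((-c) * sin (a*u) + (-a) * cos (a*u)) / D)
     + exp (-(c*u)) * (((a^2-c^2) * sin (a*u) + (-2*a*c) * cos (a*u)) / D^2)"
  have "has_bochner_integral lborel (\<lambda>u. indicator {0<..} u *\<^sub>R (exp (-(c*u)) * (u * sin (a*u)))) (- ?F 0)"
  proof (rule lap_FTC)
    show "set_integrable lborel {0<..} (\<lambda>u. exp (- (c * u)) * (u * sin (a*u)))"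
    proof (rule integ_bound[OF c, where K=1])
      fix u :: real assume "u > 0"
      have "\<bar>u * sin (a*u)\<bar> = u * \<bar>sin (a*u)\<bar>" using \<open>u > 0\<close> by (simp add: abs_mult)
      also have "\<dots> \<le> u * 1" by (rule mult_left_mono) (use \<open>u > 0\<close> in auto)
      finally have "\<bar>u * sin (a*u)\<bar> \<le> u * 1" .
      then show "\<bar>u * sin (a*u)\<bar> \<le> 1 * (1 + u)" by simp
    qed auto
    show "(?F has_real_derivative exp (- (c * x)) * (x * sin (a*x))) (at x)" for x
      apply (insert d) apply (rule derivative_eq_intros refl | simp)+
      apply (simp add: field_simps) unfolding D_def by algebra
    show "(?F \<longlongrightarrow> 0) at_top"
      by (rule tendsto_add_zero tendsto_zero_bdd[OF exp_lim1[OF c] trig_bdd_div[OF d]]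
          tendsto_zero_bdd[OF exp_lim0[OF c] trig_bdd_div[OF d2]])+
  qed (auto intro!: continuous_intros)
  then show ?thesis using d by (simp add: D_def)
qed

definition fL :: "real \<Rightarrow> real \<Rightarrow> real \<Rightarrow> real" where
  "fL a b u = (if a = b then (1 - cos (a*u))/a^4 - u * sin (a*u) / (2*a^3)
     else ((1 - cos (a*u))/a^2 - (1 - cos (b*u))/b^2) / (b^2 - a^2))"

definition PP :: "real \<Rightarrow> real \<Rightarrow> real \<Rightarrow> real" where
  "PP a b c = c * (c^2 + a^2) * (c^2 + b^2)"

lemma lapfL: assumes c: "c > 0" and a: "a > 0" and b: "b > 0"
  shows "has_bochner_integral lborel (\<lambda>u. indicator {0<..} u *\<^sub>R (exp (-(c*u)) * fL a b u)) (1 / PP a b c)"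
proof (cases "a = b")
  case True
  have h: "has_bochner_integral lborel (\<lambda>u. (1/a^4) * (indicator {0<..} u *\<^sub>R (exp (-(c*u)) * 1))
      - (1/a^4) * (indicator {0<..} u *\<^sub>R (exp (-(c*u)) * cos (a*u)))
      - (1/(2*a^3)) * (indicator {0<..} u *\<^sub>R (exp (-(c*u)) * (u * sin (a*u)))))
     ((1/a^4) * (1/c) - (1/a^4) * (c/(a^2+c^2)) - (1/(2*a^3)) * (2*a*c/(a^2+c^2)^2))"
    by (intro has_bochner_integral_diff has_bochner_integral_mult_right lap1 lapcos lapusin c)
  have d: "a^2 + c^2 > 0" using c by (simp add: add_nonneg_pos)
  show ?thesis
  proof (rule has_bochner_integral_cong[THEN iffD1, OF refl _ _ h])
    show "(1/a^4) * (indicator {0<..} u *\<^sub>R (exp (-(c*u)) * 1))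
      - (1/a^4) * (indicator {0<..} u *\<^sub>R (exp (-(c*u)) * cos (a*u)))
      - (1/(2*a^3)) * (indicator {0<..} u *\<^sub>R (exp (-(c*u)) * (u * sin (a*u)))) =
      indicator {0<..} u *\<^sub>R (exp (-(c*u)) * fL a b u)" for u
      using True a by (auto simp: fL_def indicator_def field_simps)
    define D where "D = a^2+c^2"
    have dD: "D > 0" using d by (simp add: D_def)
    have P: "PP a b c = c * D * D" using True by (simp add: PP_def D_def add.commute)
    show "(1/a^4) * (1/c) - (1/a^4) * (c/(a^2+c^2)) - (1/(2*a^3)) * (2*a*c/(a^2+c^2)^2) = 1 / PP a b c"
      unfolding P D_def[symmetric] using a c dD apply (simp add: field_simps) unfolding D_def by algebra
  qed
next
  case False
  define E where "E = b^2 - a^2"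
  have ab: "E \<noteq> 0" using False a b by (simp add: power2_eq_iff E_def)
  have h: "has_bochner_integral lborel (\<lambda>u. (1/(a^2*E) - 1/(b^2*E)) * (indicator {0<..} u *\<^sub>R (exp (-(c*u)) * 1))
      - (1/(a^2*E)) * (indicator {0<..} u *\<^sub>R (exp (-(c*u)) * cos (a*u)))
      + (1/(b^2*E)) * (indicator {0<..} u *\<^sub>R (exp (-(c*u)) * cos (b*u))))
     ((1/(a^2*E) - 1/(b^2*E)) * (1/c) - (1/(a^2*E)) * (c/(a^2+c^2)) + (1/(b^2*E)) * (c/(b^2+c^2)))"
    by (intro has_bochner_integral_diff has_bochner_integral_add has_bochner_integral_mult_right lap1 lapcos c)
  have d: "a^2 + c^2 > 0" "b^2 + c^2 > 0" using c by (simp_all add: add_nonneg_pos)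
  show ?thesis
  proof (rule has_bochner_integral_cong[THEN iffD1, OF refl _ _ h])
    show "(1/(a^2*E) - 1/(b^2*E)) * (indicator {0<..} u *\<^sub>R (exp (-(c*u)) * 1))
      - (1/(a^2*E)) * (indicator {0<..} u *\<^sub>R (exp (-(c*u)) * cos (a*u)))
      + (1/(b^2*E)) * (indicator {0<..} u *\<^sub>R (exp (-(c*u)) * cos (b*u))) =
      indicator {0<..} u *\<^sub>R (exp (-(c*u)) * fL a b u)" for u
      using False a b ab unfolding fL_def E_def[symmetric] by (auto simp: indicator_def field_simps)
    show "(1/(a^2*E) - 1/(b^2*E)) * (1/c) - (1/(a^2*E)) * (c/(a^2+c^2)) + (1/(b^2*E)) * (c/(b^2+c^2)) = 1 / PP a b c"
    proof -
      define A2 where "A2 = a^2+c^2"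
      define B2 where "B2 = b^2+c^2"
      have P: "PP a b c = c * A2 * B2" by (simp add: PP_def A2_def B2_def add.commute)
      have "A2 > 0" "B2 > 0" using d by (simp_all add: A2_def B2_def)
      then show ?thesis
        unfolding P A2_def[symmetric] B2_def[symmetric] using a b c ab
        apply (simp add: field_simps) unfolding E_def A2_def B2_def by algebra
    qed
  qed
qed

lemma p_eval:
  fixes r y1 y2 t :: real
  shows "(complex_of_real t - complex_of_real r) *
           (\<Prod>j\<in>{1..2::nat}.
              (complex_of_real t - (complex_of_real r + \<i> * complex_of_real (if j = 1 then y1 else y2))) *
              (complex_of_real t - (complex_of_real r - \<i> * complex_of_real (if j = 1 then y1 else y2))))
         = complex_of_real (PP y1 y2 (t - r))"
proof -
  have s: "{1..2::nat} = {1,2}" by auto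
  have e: "(w - (v + \<i> * y)) * (w - (v - \<i> * y)) = (w - v)^2 + y^2" for w v y :: complex
    by (simp add: algebra_simps power2_eq_square)
  show ?thesis unfolding s by (simp add: e PP_def)
qed

lemma fL_cont: assumes "a > 0" "b > 0" shows "continuous_on UNIV (fL a b)"
proof (cases "a = b")
  case True
  then have "fL a b = (\<lambda>u. (1 - cos (a*u))/a^4 - u * sin (a*u) / (2*a^3))"
    by (auto simp: fL_def)
  then show ?thesis using assms by (auto intro!: continuous_intros)
next
  case False
  then have "fL a b = (\<lambda>u. ((1 - cos (a*u))/a^2 - (1 - cos (b*u))/b^2) / (b^2 - a^2))"
    by (auto simp: fL_def)
  then show ?thesis using assms False by (auto intro!: continuous_intros simp: power2_eq_iff)
qed

lemma fL_bound: assumes "a > 0" "b > 0"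
  shows "\<exists>K. \<forall>u>0. \<bar>fL a b u\<bar> \<le> K * (1 + u)"
proof (cases "a = b")
  case True
  have "\<bar>fL a b u\<bar> \<le> (2/a^4 + 1/(2*a^3)) * (1 + u)" if "u > 0" for u
  proof -
    have c1: "\<bar>1 - cos (a*u)\<bar> \<le> 2" by (smt (verit) cos_ge_minus_one cos_le_one)
    have s1: "\<bar>u * sin (a*u)\<bar> \<le> u" using that abs_sin_le_one[of "a*u"]
      by (simp add: abs_mult mult_left_le)
    have "\<bar>fL a b u\<bar> \<le> \<bar>1 - cos (a*u)\<bar>/a^4 + \<bar>u * sin (a*u)\<bar> / (2*a^3)"
      using abs_triangle_ineq4[of "(1 - cos (a*u))/a^4" "u * sin (a*u) / (2*a^3)"] True assms
      by (simp add: fL_def abs_divide abs_mult)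
    also have "\<dots> \<le> 2/a^4 + u/(2*a^3)"
      using c1 s1 assms by (intro add_mono divide_right_mono) auto
    also have "\<dots> \<le> (2/a^4 + 1/(2*a^3)) * (1 + u)"
    proof -
      have "2/a^4 \<le> 2*(1+u)/a^4" using that assms by (intro divide_right_mono) auto
      moreover have "u/(2*a^3) \<le> (1+u)/(2*a^3)" using assms by (intro divide_right_mono) auto
      moreover have "(2/a^4 + 1/(2*a^3)) * (1 + u) = 2*(1+u)/a^4 + (1+u)/(2*a^3)"
        using assms by (simp add: field_simps)
      ultimately show ?thesis by linarith
    qed
    finally show ?thesis .
  qed
  then show ?thesis by blast
next
  case False
  have "\<bar>fL a b u\<bar> \<le> ((2/a^2 + 2/b^2) / \<bar>b^2 - a^2\<bar>) * (1 + u)" if "u > 0" for u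
  proof -
    have c1: "\<bar>1 - cos (a*u)\<bar> \<le> 2" "\<bar>1 - cos (b*u)\<bar> \<le> 2"
      by (smt (verit) cos_ge_minus_one cos_le_one)+
    have "\<bar>fL a b u\<bar> = \<bar>(1 - cos (a*u))/a^2 - (1 - cos (b*u))/b^2\<bar> / \<bar>b^2 - a^2\<bar>"
      using False by (simp add: fL_def abs_divide)
    also have "\<dots> \<le> (2/a^2 + 2/b^2) / \<bar>b^2 - a^2\<bar>"
    proof (rule divide_right_mono)
      have "\<bar>(1 - cos (a*u))/a^2 - (1 - cos (b*u))/b^2\<bar> \<le> \<bar>1 - cos (a*u)\<bar>/a^2 + \<bar>1 - cos (b*u)\<bar>/b^2"
        using abs_triangle_ineq4[of "(1 - cos (a*u))/a^2" "(1 - cos (b*u))/b^2"] by (simp add: abs_divide)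
      also have "\<dots> \<le> 2/a^2 + 2/b^2" using c1 by (intro add_mono divide_right_mono) auto
      finally show "\<bar>(1 - cos (a*u))/a^2 - (1 - cos (b*u))/b^2\<bar> \<le> 2/a^2 + 2/b^2" .
    qed simp
    also have "\<dots> \<le> ((2/a^2 + 2/b^2) / \<bar>b^2 - a^2\<bar>) * (1 + u)"
    proof -
      have K0: "0 \<le> (2/a^2 + 2/b^2) / \<bar>b^2 - a^2\<bar>" by (auto intro!: divide_nonneg_nonneg add_nonneg_nonneg)
      show ?thesis using that mult_left_mono[OF _ K0, of 1 "1+u"] by simp
    qed
    finally show ?thesis by simp
  qed
  then show ?thesis by blast
qed

lemma sin_mult_bound: "\<bar>sin (real k * y)\<bar> \<le> real k * \<bar>sin y\<bar>"
proof (induction k)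
  case 0 then show ?case by simp
next
  case (Suc k)
  have "sin (real (Suc k) * y) = sin (real k * y) * cos y + cos (real k * y) * sin y"
    by (simp add: distrib_right sin_add)
  then have "\<bar>sin (real (Suc k) * y)\<bar> \<le> \<bar>sin (real k * y)\<bar> * \<bar>cos y\<bar> + \<bar>cos (real k * y)\<bar> * \<bar>sin y\<bar>"
    by (metis abs_mult abs_triangle_ineq)
  also have "\<dots> \<le> \<bar>sin (real k * y)\<bar> * 1 + 1 * \<bar>sin y\<bar>"
    by (rule add_mono; rule mult_mono; simp)
  also have "\<dots> \<le> real k * \<bar>sin y\<bar> + \<bar>sin y\<bar>" using Suc by simp
  finally show ?case by (simp add: algebra_simps)
qed

lemma fL_nonneg:
  assumes a: "a > 0" and k: "k \<ge> 2" and b: "b = real k * a"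
  shows "fL a b u \<ge> 0"
proof -
  have ab: "a \<noteq> b" using a k b by auto
  have k1: "real k > 1" using k by simp
  have bb: "b^2 - a^2 > 0" using a k1 b
    by (simp add: power_mult_distrib)
  define y where "y = a * u / 2"
  have c1: "1 - cos (a*u) = 2 * (sin y)^2" unfolding y_def
    using cos_double_sin[of "a*u/2"] by simp
  have c2: "1 - cos (b*u) = 2 * (sin (real k * y))^2" unfolding y_def b
    using cos_double_sin[of "real k * (a*u/2)"] by (simp add: algebra_simps)
  have sq: "(sin (real k * y))^2 \<le> (real k)^2 * (sin y)^2"
  proof -
    have "\<bar>sin (real k * y)\<bar>^2 \<le> (real k * \<bar>sin y\<bar>)^2"
      by (rule power_mono[OF sin_mult_bound]) simp
    then show ?thesis by (simp add: power_mult_distrib)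
  qed
  have "(1 - cos (b*u))/b^2 \<le> (1 - cos (a*u))/a^2"
  proof -
    have "(1 - cos (b*u))/b^2 = 2 * (sin (real k * y))^2 / ((real k)^2 * a^2)"
      using c2 b by (simp add: power_mult_distrib)
    also have "\<dots> \<le> 2 * ((real k)^2 * (sin y)^2) / ((real k)^2 * a^2)"
      using sq by (intro divide_right_mono) auto
    also have "\<dots> = (1 - cos (a*u))/a^2" using c1 k1 by simp
    finally show ?thesis .
  qed
  then show ?thesis using ab bb unfolding fL_def by (simp add: divide_nonneg_pos)
qed

lemma fL_neg_eq: assumes a: "a > 0" shows "fL a a (5*pi/(2*a)) < 0"
proof -
  have e: "a * (5*pi/(2*a)) = pi/2 + 2*pi" using a by (simp add: field_simps)
  have cs: "cos (a * (5*pi/(2*a))) = 0" "sin (a * (5*pi/(2*a))) = 1"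
    unfolding e by (simp_all only: sin_periodic cos_periodic cos_pi_half sin_pi_half)
  have "fL a a (5*pi/(2*a)) = 1/a^4 - (5*pi/(2*a)) / (2*a^3)"
    unfolding fL_def using cs by simp
  also have "\<dots> = (1 - 5*pi/4) / a^4" using a by (simp add: field_simps power_def)
  also have "\<dots> < 0" using a pi_gt3 by (intro divide_neg_pos) auto
  finally show ?thesis .
qed

lemma fL_neg_nonint: assumes a: "a > 0" and ab: "a < b" and nn: "b / a \<notin> \<nat>"
  shows "fL a b (2*pi/a) < 0"
proof -
  have e: "a * (2*pi/a) = 2*pi" using a by simp
  have c: "cos (b * (2*pi/a)) \<noteq> 1"
  proof
    assume "cos (b * (2*pi/a)) = 1"
    then obtain n :: int where n: "b * (2*pi/a) = n * 2 * pi" by (auto simp: cos_one_2pi_int)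
    then have "b / a = n" using a by (simp add: field_simps)
    moreover have "b / a > 0" using a ab by simp
    ultimately have "b / a = real (nat n)" by simp
    then show False using nn by (metis of_nat_in_Nats)
  qed
  have c': "1 - cos (b * (2*pi/a)) > 0" using c cos_le_one[of "b * (2*pi/a)"] by linarith
  have bb: "b^2 - a^2 > 0" using a ab by (simp add: power_strict_mono)
  have "fL a b (2*pi/a) = - ((1 - cos (b * (2*pi/a)))/b^2) / (b^2 - a^2)"
    unfolding fL_def using ab e by simp
  also have "\<dots> < 0" using c' bb ab a by (intro divide_neg_pos) auto
  finally show ?thesis .
qed

lemma moment_lap:
  assumes s: "s > 0" and a: "a > 0" and b: "b > 0"
  shows "has_bochner_integral lborel (\<lambda>u. indicator {0<..} u *\<^sub>R (exp (-(s*u)) * fL a b u * exp (-u) ^ n))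
           (1 / PP a b (s + real n))"
proof -
  have c: "s + real n > 0" using s by simp
  show ?thesis
  proof (rule has_bochner_integral_cong[THEN iffD1, OF refl _ refl lapfL[OF c a b]])
    fix u :: real
    have "exp (-((s + real n) * u)) = exp (-(s*u)) * exp (-u) ^ n"
      by (simp add: exp_of_nat_mult[symmetric] exp_add[symmetric] algebra_simps)
    then show "indicator {0<..} u *\<^sub>R (exp (-((s + real n)*u)) * fL a b u) =
       indicator {0<..} u *\<^sub>R (exp (-(s*u)) * fL a b u * exp (-u) ^ n)" by simp
  qed
qed

lemma hms_if:
  assumes s: "s > 0" and a: "a > 0" and b: "b > 0"
    and nn: "\<And>u. u > 0 \<Longrightarrow> fL a b u \<ge> 0"
    and x: "\<And>n. x n = 1 / PP a b (s + real n)"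
  shows "hausdorff_moment_seq x"
proof -
  define g where "g u = indicator {0<..} u * (exp (-(s*u)) * fL a b u)" for u :: real
  have gnn: "g u \<ge> 0" for u using nn by (auto simp: g_def indicator_def)
  have gm: "g \<in> borel_measurable borel"
    unfolding g_def using fL_cont[OF a b] by (intro borel_measurable_times borel_measurable_indicator)
       (auto intro!: borel_measurable_continuous_onI continuous_intros)
  define M where "M = density lborel (\<lambda>u. ennreal (g u))"
  define \<mu> where "\<mu> = distr M (restrict_space borel {0..1::real}) (\<lambda>u. exp (- \<bar>u\<bar>))"
  have meas: "(\<lambda>u. exp (- \<bar>u\<bar>)) \<in> measurable M (restrict_space borel {0..1::real})"
    unfolding M_def by (rule measurable_restrict_space2) auto
  have hb: "has_bochner_integral lborel (\<lambda>u. g u * exp (-u) ^ n) (1 / PP a b (s + real n))" for n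
    using moment_lap[OF s a b, of n] by (simp add: g_def mult_ac)
  have ig: "integrable lborel g"
    using has_bochner_integral_iff[THEN iffD1, OF hb[of 0]] by simp
  have fin: "finite_measure M"
  proof (rule finite_measureI)
    have "emeasure M (space M) = (\<integral>\<^sup>+ u. ennreal (g u) \<partial>lborel)"
      unfolding M_def using gm by (simp add: emeasure_density)
    also have "\<dots> = ennreal (integral\<^sup>L lborel g)"
      using ig gnn by (intro nn_integral_eq_integral) auto
    finally show "emeasure M (space M) \<noteq> \<infinity>" by simp
  qed
  have mom: "x n = (\<integral>t. t ^ n \<partial>\<mu>)" for n
  proof -
    have "(\<integral>t. t ^ n \<partial>\<mu>) = (\<integral>u. exp (- \<bar>u\<bar>) ^ n \<partial>M)"
      unfolding \<mu>_def by (rule integral_distr[OF meas], rule measurable_restrict_space1) measurable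
    also have "\<dots> = (\<integral>u. g u *\<^sub>R exp (- \<bar>u\<bar>) ^ n \<partial>lborel)"
      unfolding M_def by (rule integral_density) (use gm gnn in auto)
    also have "\<dots> = (\<integral>u. g u * exp (-u) ^ n \<partial>lborel)"
      by (rule Bochner_Integration.integral_cong) (auto simp: g_def indicator_def)
    also have "\<dots> = 1 / PP a b (s + real n)"
      using hb[of n] by (rule has_bochner_integral_integral_eq)
    finally show ?thesis using x by simp
  qed
  have pos: "x n > 0" for n
    unfolding x PP_def using s by (auto intro!: divide_pos_pos mult_pos_pos add_pos_nonneg)
  show ?thesis
    unfolding hausdorff_moment_seq_def
  proof (intro conjI allI exI[of _ \<mu>])
    show "space \<mu> = {0..1}" unfolding \<mu>_def by simp
    show "sets \<mu> = sets (restrict_space borel {0..1})" unfolding \<mu>_def by simp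
    show "finite_measure \<mu>" unfolding \<mu>_def
      by (rule finite_measure.finite_measure_distr[OF fin meas])
  qed (use pos mom in auto)
qed

lemma cont_bound01:
  assumes "continuous_on UNIV (h :: real \<Rightarrow> real)"
  obtains B where "B \<ge> 0" "\<And>t. t \<in> {0..1} \<Longrightarrow> \<bar>h t\<bar> \<le> B"
proof -
  have "continuous_on {0..1} h" using assms by (rule continuous_on_subset) auto
  from continuous_on_compact_bound[OF compact_Icc this] obtain B where
    "B \<ge> 0" "\<And>t. t \<in> {0..1} \<Longrightarrow> norm (h t) \<le> B" by blast
  then show ?thesis using that by auto
qed

lemma mu_meas:
  assumes st: "sets \<mu> = sets (restrict_space borel {0..1::real})"
    and h: "continuous_on UNIV (h :: real \<Rightarrow> real)"
  shows "h \<in> borel_measurable \<mu>"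
proof -
  have "h \<in> borel_measurable (restrict_space borel {0..1::real})"
    by (rule measurable_restrict_space1) (rule borel_measurable_continuous_onI[OF h])
  then show ?thesis unfolding measurable_cong_sets[OF st refl, of borel] .
qed

lemma mu_int:
  assumes st: "sets \<mu> = sets (restrict_space borel {0..1::real})" and sp: "space \<mu> = {0..1}"
    and fm: "finite_measure \<mu>" and h: "continuous_on UNIV (h :: real \<Rightarrow> real)"
  shows "integrable \<mu> h"
proof -
  obtain B where B: "\<And>t. t \<in> {0..1} \<Longrightarrow> \<bar>h t\<bar> \<le> B" using cont_bound01[OF h] by blast
  show ?thesis
  proof (rule finite_measure.integrable_const_bound[OF fm])
    show "AE x in \<mu>. norm (h x) \<le> B" using B sp by (intro AE_I2) auto
    show "h \<in> borel_measurable \<mu>" by (rule mu_meas[OF st h])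
  qed
qed

lemma lf_int:
  assumes s: "s > 0" and a: "a > 0" and b: "b > 0" and h: "continuous_on UNIV (h :: real \<Rightarrow> real)"
  shows "integrable lborel (\<lambda>u. indicator {0<..} u *\<^sub>R (exp (-(s*u)) * (h (exp (-u)) * fL a b u)))"
proof -
  obtain B where B0: "B \<ge> 0" and B: "\<And>t. t \<in> {0..1} \<Longrightarrow> \<bar>h t\<bar> \<le> B" using cont_bound01[OF h] by blast
  obtain K where K: "\<And>u. u > 0 \<Longrightarrow> \<bar>fL a b u\<bar> \<le> K * (1 + u)" using fL_bound[OF a b] by blast
  have "set_integrable lborel {0<..} (\<lambda>u. exp (-(s*u)) * (h (exp (-u)) * fL a b u))"
  proof (rule integ_bound[OF s, where K = "B * K"])
    show "(\<lambda>u. h (exp (-u)) * fL a b u) \<in> borel_measurable borel"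
      by (intro borel_measurable_continuous_onI continuous_intros
          continuous_on_compose2[OF h] continuous_on_compose2[OF fL_cont[OF a b]]) auto
    fix u :: real assume u: "u > 0"
    have "exp (-u) \<in> {0..1}" using u by auto
    then have hb: "\<bar>h (exp (-u))\<bar> \<le> B" by (rule B)
    have "\<bar>h (exp (-u)) * fL a b u\<bar> = \<bar>h (exp (-u))\<bar> * \<bar>fL a b u\<bar>" by (simp add: abs_mult)
    also have "\<dots> \<le> B * (K * (1 + u))" using hb K[OF u] B0 by (intro mult_mono) auto
    finally show "\<bar>h (exp (-u)) * fL a b u\<bar> \<le> B * K * (1 + u)" by (simp add: mult_ac)
  qed
  then show ?thesis by (simp add: set_integrable_def)
qed

lemma eps_zero:
  fixes d C :: real
  assumes C: "C \<ge> 0" and e: "\<And>\<epsilon>. \<epsilon> > 0 \<Longrightarrow> \<bar>d\<bar> \<le> \<epsilon> * C"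
  shows "d = 0"
proof (rule ccontr)
  assume "d \<noteq> 0"
  then have d: "\<bar>d\<bar> > 0" by simp
  have "\<bar>d\<bar> \<le> (\<bar>d\<bar> / (C + 1)) * C" using e[of "\<bar>d\<bar> / (C + 1)"] d C by simp
  also have "\<dots> < \<bar>d\<bar>" using d C by (simp add: field_simps)
  finally show False by simp
qed

lemma eqL:
  assumes s: "s > 0" and a: "a > 0" and b: "b > 0"
    and st: "sets \<mu> = sets (restrict_space borel {0..1::real})" and sp: "space \<mu> = {0..1}"
    and fm: "finite_measure \<mu>"
    and mo: "\<And>n. (\<integral>t. t ^ n \<partial>\<mu>) = 1 / PP a b (s + real n)"
    and h: "continuous_on UNIV (h :: real \<Rightarrow> real)"
  shows "(\<integral>t. h t \<partial>\<mu>) = (\<integral>u. indicator {0<..} u *\<^sub>R (exp (-(s*u)) * (h (exp (-u)) * fL a b u)) \<partial>lborel)"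
proof -
  define Lf where "Lf g = (\<integral>u. indicator {0<..} u *\<^sub>R (exp (-(s*u)) * (g (exp (-u)) * fL a b u)) \<partial>lborel)"
    for g :: "real \<Rightarrow> real"
  define m where "m = measure \<mu> (space \<mu>)"
  define Ki where "Ki = (\<integral>u. indicator {0<..} u *\<^sub>R (exp (-(s*u)) * \<bar>fL a b u\<bar>) \<partial>lborel)"
  obtain K where K: "\<And>u. u > 0 \<Longrightarrow> \<bar>fL a b u\<bar> \<le> K * (1 + u)" using fL_bound[OF a b] by blast
  have iKi: "integrable lborel (\<lambda>u. indicator {0<..} u *\<^sub>R (exp (-(s*u)) * \<bar>fL a b u\<bar>))"
  proof -
    have "set_integrable lborel {0<..} (\<lambda>u. exp (-(s*u)) * \<bar>fL a b u\<bar>)"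
      by (rule integ_bound[OF s, where K = K])
         (auto intro!: borel_measurable_continuous_onI continuous_intros fL_cont[OF a b] K)
    then show ?thesis by (simp add: set_integrable_def)
  qed
  have m0: "m \<ge> 0" unfolding m_def by simp
  have Ki0: "Ki \<ge> 0" unfolding Ki_def by (intro integral_nonneg_AE) (auto simp: indicator_def)
  have key: "\<bar>(\<integral>t. h t \<partial>\<mu>) - Lf h\<bar> \<le> \<epsilon> * (m + Ki)" if e: "\<epsilon> > 0" for \<epsilon>
  proof -
    have hc01: "continuous_on {0..1} h" using h by (rule continuous_on_subset) auto
    obtain q where pq: "polynomial_function q" and qe: "\<And>t. t \<in> {0..1::real} \<Longrightarrow> norm (h t - q t) < \<epsilon>"
      using Stone_Weierstrass_polynomial_function[OF compact_Icc hc01 e] by blast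
    obtain c N where qd: "q = (\<lambda>t. \<Sum>i\<le>N. c i * t ^ i)"
      using pq unfolding real_polynomial_function_eq[symmetric] real_polynomial_function_iff_sum by blast
    have qc: "continuous_on UNIV q" unfolding qd by (intro continuous_intros)
    have hq: "continuous_on UNIV (\<lambda>t. h t - q t)" using h qc by (intro continuous_intros)
    have i1: "(\<integral>t. q t \<partial>\<mu>) = (\<Sum>i\<le>N. c i * (1 / PP a b (s + real i)))"
    proof -
      have int_i: "integrable \<mu> (\<lambda>t. c i * t ^ i)" for i
        by (rule mu_int[OF st sp fm]) (intro continuous_intros)
      have int_i': "integrable \<mu> (\<lambda>t. t ^ i)" for i
        by (rule mu_int[OF st sp fm]) (intro continuous_intros)
      have "(\<integral>t. q t \<partial>\<mu>) = (\<Sum>i\<le>N. (\<integral>t. c i * t ^ i \<partial>\<mu>))"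
        unfolding qd by (rule Bochner_Integration.integral_sum[where f="\<lambda>i t. c i * t ^ i", OF int_i])
      also have "\<dots> = (\<Sum>i\<le>N. c i * (1 / PP a b (s + real i)))"
      proof (rule sum.cong[OF refl])
        fix i
        have "(\<integral>t. c i * t ^ i \<partial>\<mu>) = c i * (\<integral>t. t ^ i \<partial>\<mu>)"
          by (rule Bochner_Integration.integral_mult_right) (rule int_i')
        then show "(\<integral>t. c i * t ^ i \<partial>\<mu>) = c i * (1 / PP a b (s + real i))"
          by (simp only: mo)
      qed
      finally show ?thesis .
    qed
    have i2: "Lf q = (\<Sum>i\<le>N. c i * (1 / PP a b (s + real i)))"
    proof -
      have hb: "has_bochner_integral lborel
          (\<lambda>u. \<Sum>i\<le>N. c i * (indicator {0<..} u *\<^sub>R (exp (-(s*u)) * fL a b u * exp (-u) ^ i)))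
          (\<Sum>i\<le>N. c i * (1 / PP a b (s + real i)))"
      proof (rule has_bochner_integral_sum)
        fix i show "has_bochner_integral lborel
          (\<lambda>u. c i * (indicator {0<..} u *\<^sub>R (exp (-(s*u)) * fL a b u * exp (-u) ^ i)))
          (c i * (1 / PP a b (s + real i)))"
          by (rule has_bochner_integral_mult_right) (rule moment_lap[OF s a b])
      qed
      have eq: "(\<Sum>i\<le>N. c i * (indicator {0<..} u *\<^sub>R (exp (-(s*u)) * fL a b u * exp (-u) ^ i)))
          = indicator {0<..} u *\<^sub>R (exp (-(s*u)) * (q (exp (-u)) * fL a b u))" for u
      proof -
        have "indicator {0<..} u *\<^sub>R (exp (-(s*u)) * (q (exp (-u)) * fL a b u))
            = (indicator {0<..} u * exp (-(s*u)) * fL a b u) * q (exp (-u))"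
          by (simp only: real_scaleR_def mult_ac)
        also have "\<dots> = (\<Sum>i\<le>N. (indicator {0<..} u * exp (-(s*u)) * fL a b u) * (c i * exp (-u) ^ i))"
          unfolding qd by (rule sum_distrib_left)
        also have "\<dots> = (\<Sum>i\<le>N. c i * (indicator {0<..} u *\<^sub>R (exp (-(s*u)) * fL a b u * exp (-u) ^ i)))"
          by (rule sum.cong[OF refl]) (simp only: real_scaleR_def mult_ac)
        finally show ?thesis by (rule sym)
      qed
      show ?thesis using hb unfolding eq Lf_def by (rule has_bochner_integral_integral_eq)
    qed
    have i3: "\<bar>(\<integral>t. h t \<partial>\<mu>) - (\<integral>t. q t \<partial>\<mu>)\<bar> \<le> \<epsilon> * m"
    proof -
      have eqd: "(\<integral>t. h t \<partial>\<mu>) - (\<integral>t. q t \<partial>\<mu>) = (\<integral>t. h t - q t \<partial>\<mu>)"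
        by (rule Bochner_Integration.integral_diff[symmetric]) (intro mu_int[OF st sp fm] h qc)+
      have "\<bar>(\<integral>t. h t - q t \<partial>\<mu>)\<bar> \<le> (\<integral>t. norm (h t - q t) \<partial>\<mu>)"
        using Bochner_Integration.integral_norm_bound[of \<mu> "\<lambda>t. h t - q t"] by simp
      also have "\<dots> \<le> (\<integral>t. \<epsilon> \<partial>\<mu>)"
      proof (rule integral_mono_AE)
        show "integrable \<mu> (\<lambda>t. norm (h t - q t))"
          by (intro integrable_norm mu_int[OF st sp fm] hq)
        show "integrable \<mu> (\<lambda>t. \<epsilon>)" using fm by (simp add: finite_measure.integrable_const)
        show "AE t in \<mu>. norm (h t - q t) \<le> \<epsilon>"
          using qe sp by (intro AE_I2) (auto intro: less_imp_le)
      qed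
      also have "\<dots> = \<epsilon> * m" unfolding m_def by simp
      finally show ?thesis unfolding eqd .
    qed
    have i4: "\<bar>Lf h - Lf q\<bar> \<le> \<epsilon> * Ki"
    proof -
      have eqd: "Lf h - Lf q = (\<integral>u. indicator {0<..} u *\<^sub>R (exp (-(s*u)) * ((h (exp (-u)) - q (exp (-u))) * fL a b u)) \<partial>lborel)"
      proof -
        have "Lf h - Lf q = (\<integral>u. indicator {0<..} u *\<^sub>R (exp (-(s*u)) * (h (exp (-u)) * fL a b u))
             - indicator {0<..} u *\<^sub>R (exp (-(s*u)) * (q (exp (-u)) * fL a b u)) \<partial>lborel)"
          unfolding Lf_def by (rule Bochner_Integration.integral_diff[symmetric, OF lf_int[OF s a b h] lf_int[OF s a b qc]])
        also have "\<dots> = (\<integral>u. indicator {0<..} u *\<^sub>R (exp (-(s*u)) * ((h (exp (-u)) - q (exp (-u))) * fL a b u)) \<partial>lborel)"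
          by (rule Bochner_Integration.integral_cong) (simp_all add: real_scaleR_def right_diff_distrib left_diff_distrib)
        finally show ?thesis .
      qed
      have "\<bar>(\<integral>u. indicator {0<..} u *\<^sub>R (exp (-(s*u)) * ((h (exp (-u)) - q (exp (-u))) * fL a b u)) \<partial>lborel)\<bar> \<le> (\<integral>u. norm (indicator {0<..} u *\<^sub>R (exp (-(s*u)) * ((h (exp (-u)) - q (exp (-u))) * fL a b u))) \<partial>lborel)"
        using Bochner_Integration.integral_norm_bound[of lborel "\<lambda>u. indicator {0<..} u *\<^sub>R (exp (-(s*u)) * ((h (exp (-u)) - q (exp (-u))) * fL a b u))"]
        by (simp only: real_norm_def)
      also have "\<dots> \<le> (\<integral>u. \<epsilon> * (indicator {0<..} u *\<^sub>R (exp (-(s*u)) * \<bar>fL a b u\<bar>)) \<partial>lborel)"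
      proof (rule Bochner_Integration.integral_mono)
        show "integrable lborel (\<lambda>u. norm (indicator {0<..} u *\<^sub>R (exp (-(s*u)) * ((h (exp (-u)) - q (exp (-u))) * fL a b u))))"
          by (intro integrable_norm lf_int[OF s a b hq])
        show "integrable lborel (\<lambda>u. \<epsilon> * (indicator {0<..} u *\<^sub>R (exp (-(s*u)) * \<bar>fL a b u\<bar>)))"
          by (intro integrable_mult_right iKi)
        fix u :: real
        show "norm (indicator {0<..} u *\<^sub>R (exp (-(s*u)) * ((h (exp (-u)) - q (exp (-u))) * fL a b u)))
            \<le> \<epsilon> * (indicator {0<..} u *\<^sub>R (exp (-(s*u)) * \<bar>fL a b u\<bar>))"
        proof (cases "u > 0")
          case True
          then have "exp (-u) \<in> {0..1}" by auto
          then have hq1: "\<bar>h (exp (-u)) - q (exp (-u))\<bar> \<le> \<epsilon>" using qe[of "exp (-u)"] by simp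
          have "norm (indicator {0<..} u *\<^sub>R (exp (-(s*u)) * ((h (exp (-u)) - q (exp (-u))) * fL a b u)))
              = exp (-(s*u)) * (\<bar>h (exp (-u)) - q (exp (-u))\<bar> * \<bar>fL a b u\<bar>)"
            using True by (simp add: abs_mult)
          also have "\<dots> \<le> exp (-(s*u)) * (\<epsilon> * \<bar>fL a b u\<bar>)"
            using hq1 by (intro mult_left_mono mult_right_mono) auto
          also have "\<dots> = \<epsilon> * (indicator {0<..} u *\<^sub>R (exp (-(s*u)) * \<bar>fL a b u\<bar>))"
            using True by simp
          finally show ?thesis .
        next
          case False
          then show ?thesis by simp
        qed
      qed
      also have "\<dots> = \<epsilon> * Ki" unfolding Ki_def by (rule Bochner_Integration.integral_mult_right) (rule iKi)
      finally show ?thesis unfolding eqd .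
    qed
    have "\<bar>(\<integral>t. h t \<partial>\<mu>) - Lf h\<bar> \<le> \<bar>(\<integral>t. h t \<partial>\<mu>) - (\<integral>t. q t \<partial>\<mu>)\<bar> + \<bar>Lf h - Lf q\<bar>"
      using i1 i2 by linarith
    also have "\<dots> \<le> \<epsilon> * m + \<epsilon> * Ki" using i3 i4 by linarith
    finally show ?thesis by (simp add: algebra_simps)
  qed
  have "(\<integral>t. h t \<partial>\<mu>) - Lf h = 0"
    by (rule eps_zero[OF _ key]) (use m0 Ki0 in simp)
  then show ?thesis unfolding Lf_def by simp
qed

lemma hms_only:
  assumes s: "s > 0" and a: "a > 0" and b: "b > 0"
    and hms: "hausdorff_moment_seq x"
    and x: "\<And>n. x n = 1 / PP a b (s + real n)"
    and u0: "u0 > 0"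
  shows "fL a b u0 \<ge> 0"
proof (rule ccontr)
  assume "\<not> fL a b u0 \<ge> 0"
  then have neg: "fL a b u0 < 0" by simp
  obtain \<mu> :: "real measure" where sp: "space \<mu> = {0..1}"
    and st: "sets \<mu> = sets (restrict_space borel {0..1})" and fm: "finite_measure \<mu>"
    and mx: "\<And>n. x n = (\<integral>t. t ^ n \<partial>\<mu>)"
    using hms unfolding hausdorff_moment_seq_def by blast
  have mo: "(\<integral>t. t ^ n \<partial>\<mu>) = 1 / PP a b (s + real n)" for n using mx x by metis
  define e0 where "e0 = exp (-(u0 + 1))"
  have e0: "e0 > 0" unfolding e0_def by simp
  define h where "h t = max 0 (t - e0) * max 0 (- fL a b (- ln (max t e0)))" for t
  have hc: "continuous_on UNIV h"
  proof -
    have "continuous_on UNIV (\<lambda>t. fL a b (- ln (max t e0)))"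
      by (rule continuous_on_compose2[OF fL_cont[OF a b]])
         (use e0 in \<open>auto intro!: continuous_intros\<close>)
    then show ?thesis unfolding h_def by (intro continuous_intros)
  qed
  have hnn: "h t \<ge> 0" for t unfolding h_def by simp
  define k where "k u = exp (-(s*u)) * (h (exp (-u)) * fL a b u)" for u
  have kc: "continuous_on UNIV k"
    unfolding k_def
    by (intro continuous_intros continuous_on_compose2[OF hc] fL_cont[OF a b]) auto
  have hk: "h (exp (-u)) * fL a b u \<le> 0" for u
  proof (cases "exp (-u) > e0")
    case True
    then have "max (exp (-u)) e0 = exp (-u)" by simp
    then have "h (exp (-u)) = (exp (-u) - e0) * max 0 (- fL a b u)" using True by (simp add: h_def)
    moreover have "max 0 (- fL a b u) * fL a b u \<le> 0"
      by (cases "fL a b u \<ge> 0") (auto simp: mult_nonpos_nonneg mult_le_0_iff)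
    ultimately show ?thesis using True
      by (simp add: mult.assoc mult_nonneg_nonpos)
  next
    case False
    then show ?thesis by (simp add: h_def)
  qed
  have knp: "k u \<le> 0" for u
    unfolding k_def using hk[of u] by (simp add: mult_nonneg_nonpos)
  have ku0: "k u0 < 0"
  proof -
    have gt: "exp (-u0) > e0" unfolding e0_def by simp
    then have "max (exp (-u0)) e0 = exp (-u0)" by simp
    then have hh: "h (exp (-u0)) = (exp (-u0) - e0) * (- fL a b u0)" using gt neg by (simp add: h_def)
    have hv: "h (exp (-u0)) * fL a b u0 = - ((exp (-u0) - e0) * (fL a b u0 * fL a b u0))"
      unfolding hh by (simp add: algebra_simps)
    have "(exp (-u0) - e0) * (fL a b u0 * fL a b u0) > 0"
      using mult_pos_pos[OF _ mult_neg_neg[OF neg neg], of "exp (-u0) - e0"] gt by simp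
    then have "h (exp (-u0)) * fL a b u0 < 0" using hv by linarith
    then show ?thesis unfolding k_def by (simp add: mult_pos_neg)
  qed
  have "(\<integral>t. h t \<partial>\<mu>) \<ge> 0" by (intro integral_nonneg_AE) (simp add: hnn)
  moreover have eq: "(\<integral>t. h t \<partial>\<mu>) = (\<integral>u. indicator {0<..} u *\<^sub>R k u \<partial>lborel)"
    unfolding k_def by (rule eqL[OF s a b st sp fm mo hc])
  moreover have "(\<integral>u. indicator {0<..} u *\<^sub>R k u \<partial>lborel) < 0"
  proof -
    have ik: "integrable lborel (\<lambda>u. indicator {0<..} u *\<^sub>R k u)"
      unfolding k_def by (rule lf_int[OF s a b hc])
    have kc': "continuous_on {u0..u0+1} k" using kc by (rule continuous_on_subset) auto
    have ik2: "integrable lborel (\<lambda>u. indicator {u0..u0+1} u *\<^sub>R k u)"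
      by (rule borel_integrable_compact[OF compact_Icc kc'])
    have "(\<integral>u. indicator {0<..} u *\<^sub>R k u \<partial>lborel) \<le> (\<integral>u. indicator {u0..u0+1} u *\<^sub>R k u \<partial>lborel)"
    proof (rule Bochner_Integration.integral_mono[OF ik ik2])
      fix u :: real
      show "indicator {0<..} u *\<^sub>R k u \<le> indicator {u0..u0+1} u *\<^sub>R k u"
        using knp[of u] u0 by (auto simp: indicator_def)
    qed
    also have "\<dots> = integral {u0..u0+1} k"
      using set_borel_integral_eq_integral(2)[of "{u0..u0+1}" k] ik2
      by (simp add: set_integrable_def set_lebesgue_integral_def)
    also have "\<dots> < 0"
    proof -
      have kint: "k integrable_on {u0..u0+1}"
        using set_borel_integral_eq_integral(1)[of "{u0..u0+1}" k] ik2 by (simp add: set_integrable_def)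
      have "0 \<le> integral {u0..u0+1} (\<lambda>u. - k u)"
        by (rule integral_nonneg) (use kint knp in \<open>auto intro: integrable_neg\<close>)
      then have le: "integral {u0..u0+1} k \<le> 0" by (simp add: integral_neg)
      have "integral {u0..u0+1} k \<noteq> 0"
      proof
        assume z: "integral {u0..u0+1} k = 0"
        have "((\<lambda>u. - k u) has_integral 0) (cbox u0 (u0+1))"
          using integrable_integral[OF integrable_neg[OF kint]] z
          by (simp add: integral_neg cbox_interval)
        then have "- k u0 = 0"
          by (rule has_integral_0_cbox_imp_0[rotated 2])
             (use kc knp in \<open>auto simp: cbox_interval intro!: continuous_intros intro: continuous_on_subset\<close>)
        then show False using ku0 by simp
      qed
      then show ?thesis using le by simp
    qed
    finally show ?thesis .
  qed
  ultimately show False by simp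
qed

theorem mainTheorem9:
  fixes r y1 y2 :: real
    and p :: "complex \<Rightarrow> complex"
    and x :: "nat \<Rightarrow> real"
  assumes "r < 0" and "0 < y1" and "y1 \<le> y2"
    and "\<And>z. p z = (z - complex_of_real r) *
           (\<Prod>j\<in>{1..2::nat}.
              (z - (complex_of_real r + \<i> * complex_of_real (if j = 1 then y1 else y2))) *
              (z - (complex_of_real r - \<i> * complex_of_real (if j = 1 then y1 else y2))))"
    and "\<And>n. complex_of_real (x n) = 1 / p (of_nat n)"
  shows "hausdorff_moment_seq x \<longleftrightarrow> (y2 / y1 \<in> \<nat> \<and> y2 / y1 > 1)"
proof -
  define s where "s = - r"
  have s: "s > 0" using assms(1) by (simp add: s_def)
  have a: "y1 > 0" by (rule assms(2))
  have b: "y2 > 0" using assms(2,3) by simp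
  have xn: "x n = 1 / PP y1 y2 (s + real n)" for n
  proof -
    have "p (of_nat n) = complex_of_real (PP y1 y2 (real n - r))"
      using assms(4)[of "of_nat n"] p_eval[of "real n" r y1 y2] by simp
    then have "complex_of_real (x n) = complex_of_real (1 / PP y1 y2 (real n - r))"
      using assms(5)[of n] by (simp only: of_real_divide of_real_1)
    then have "x n = 1 / PP y1 y2 (real n - r)" by (simp only: of_real_eq_iff)
    then show ?thesis unfolding s_def by (simp add: algebra_simps)
  qed
  show ?thesis
  proof
    assume hms: "hausdorff_moment_seq x"
    have nn: "fL y1 y2 u \<ge> 0" if "u > 0" for u
      by (rule hms_only[OF s a b hms xn that])
    have ne: "y1 \<noteq> y2"
    proof
      assume e: "y1 = y2"
      have "fL y1 y1 (5*pi/(2*y1)) < 0" by (rule fL_neg_eq[OF a])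
      moreover have "fL y1 y1 (5*pi/(2*y1)) \<ge> 0" using nn[of "5*pi/(2*y1)"] a e by simp
      ultimately show False by simp
    qed
    then have lt: "y1 < y2" using assms(3) by simp
    have "y2 / y1 \<in> \<nat>"
    proof (rule ccontr)
      assume "y2 / y1 \<notin> \<nat>"
      then have "fL y1 y2 (2*pi/y1) < 0" by (rule fL_neg_nonint[OF a lt])
      moreover have "fL y1 y2 (2*pi/y1) \<ge> 0" using nn[of "2*pi/y1"] a by simp
      ultimately show False by simp
    qed
    moreover have "y2 / y1 > 1" using lt a by simp
    ultimately show "y2 / y1 \<in> \<nat> \<and> y2 / y1 > 1" by simp
  next
    assume h: "y2 / y1 \<in> \<nat> \<and> y2 / y1 > 1"
    then obtain k :: nat where k: "y2 / y1 = real k" by (auto elim: Nats_cases)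
    have k2: "k \<ge> 2" using h k by simp
    have yb: "y2 = real k * y1" using k a by (simp add: field_simps)
    show "hausdorff_moment_seq x"
      by (rule hms_if[OF s a b _ xn]) (rule fL_nonneg[OF a k2 yb])
  qed
qed

end
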